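(* Let $M=\mathbb R^d$, $TM=\mathbb R^d\times\mathbb R^d$, and let $\phi:\mathcal P_2(M)\to(-\infty,\infty]$ and $\Phi:\mathcal P_2(TM)\to(-\infty,\infty]$ be lower semicontinuous for narrow convergence with $\Phi(\mu)=\phi(\pi^1_\#\mu)$ for all $\mu\in\mathcal P_2(TM)$. Let $\mu\in\mathcal P_2(TM)$ with $\Phi(\mu)<\infty$, and let $\varrho=\pi^1_\#\mu$. Then $|\partial\Phi|(\mu)=|\partial\phi|(\varrho)$.
   Context: $\mathcal P_2(X)$ carries the quadratic Wasserstein distance $W_2$; $\pi^1(x,v)=x$. For a function $\psi$ on a metric space $(\mathcal S,\mathrm{dist})$ and a point $v$ with $\psi(v)$ finite, the (global) metric slope is $|\partial\psi|(v):=\limsup_{w\to v}\frac{(\psi(v)-\psi(w))^+}{\mathrm{dist}(w,v)}$. *)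

theory Defs
  imports "HOL-Probability.Probability"
begin

definition P2 :: "('a::euclidean_space) measure set" where
  "P2 = {\<mu>. prob_space \<mu> \<and> sets \<mu> = sets borel \<and>
             (\<integral>\<^sup>+x. ennreal ((norm x)\<^sup>2) \<partial>\<mu>) < \<infinity>}"

definition couplings :: "('a::euclidean_space) measure \<Rightarrow> 'a measure \<Rightarrow> ('a \<times> 'a) measure set" where
  "couplings \<mu> \<nu> = {\<pi>. prob_space \<pi> \<and> sets \<pi> = sets borel \<and>
                        distr \<pi> borel fst = \<mu> \<and> distr \<pi> borel snd = \<nu>}"

definition W2 :: "('a::euclidean_space) measure \<Rightarrow> 'a measure \<Rightarrow> real" where
  "W2 \<mu> \<nu> = sqrt (enn2real (INF \<pi>\<in>couplings \<mu> \<nu>.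
                 \<integral>\<^sup>+p. ennreal ((dist (fst p) (snd p))\<^sup>2) \<partial>\<pi>))"

definition narrow_conv :: "(nat \<Rightarrow> ('a::euclidean_space) measure) \<Rightarrow> 'a measure \<Rightarrow> bool" where
  "narrow_conv \<mu>s \<mu> \<longleftrightarrow>
     (\<forall>f::'a \<Rightarrow> real. continuous_on UNIV f \<and> bounded (range f) \<longrightarrow>
        (\<lambda>n. \<integral>x. f x \<partial>(\<mu>s n)) \<longlonglongrightarrow> (\<integral>x. f x \<partial>\<mu>))"

definition narrow_lsc :: "(('a::euclidean_space) measure \<Rightarrow> ereal) \<Rightarrow> bool" where
  "narrow_lsc \<psi> \<longleftrightarrow>
     (\<forall>\<mu>s \<mu>. (\<forall>n. \<mu>s n \<in> P2) \<and> \<mu> \<in> P2 \<and> narrow_conv \<mu>s \<mu> \<longrightarrow>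
        \<psi> \<mu> \<le> liminf (\<lambda>n. \<psi> (\<mu>s n)))"

definition slope :: "'m set \<Rightarrow> ('m \<Rightarrow> 'm \<Rightarrow> real) \<Rightarrow> ('m \<Rightarrow> ereal) \<Rightarrow> 'm \<Rightarrow> ereal" where
  "slope S d \<psi> v = (INF r\<in>{0<..}. max 0 (SUP w\<in>{w\<in>S. 0 < d w v \<and> d w v < r}.
                        max 0 (\<psi> v - \<psi> w) / ereal (d w v)))"

end

theory Submission
  imports Defs
begin

lemma borel_fst[measurable]:
  "fst \<in> borel_measurable (borel :: ('a::second_countable_topology \<times> 'b::second_countable_topology) measure)"
  by (intro borel_measurable_continuous_onI continuous_intros)

lemma borel_snd[measurable]:
  "snd \<in> borel_measurable (borel :: ('a::second_countable_topology \<times> 'b::second_countable_topology) measure)"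
  by (intro borel_measurable_continuous_onI continuous_intros)

lemma borel_fst'[measurable (raw)]:
  fixes f :: "'c \<Rightarrow> ('a::second_countable_topology \<times> 'b::second_countable_topology)"
  shows "f \<in> borel_measurable M \<Longrightarrow> (\<lambda>x. fst (f x)) \<in> borel_measurable M"
  using measurable_compose[OF _ borel_fst] by blast

lemma borel_snd'[measurable (raw)]:
  fixes f :: "'c \<Rightarrow> ('a::second_countable_topology \<times> 'b::second_countable_topology)"
  shows "f \<in> borel_measurable M \<Longrightarrow> (\<lambda>x. snd (f x)) \<in> borel_measurable M"
  using measurable_compose[OF _ borel_snd] by blast

definition cost :: "(('a::euclidean_space) \<times> 'a) measure \<Rightarrow> ennreal" where
  "cost \<pi> = (\<integral>\<^sup>+p. ennreal ((dist (fst p) (snd p))\<^sup>2) \<partial>\<pi>)"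

definition Wc :: "('a::euclidean_space) measure \<Rightarrow> 'a measure \<Rightarrow> ennreal" where
  "Wc \<mu> \<nu> = (INF \<pi>\<in>couplings \<mu> \<nu>. cost \<pi>)"

lemma W2_Wc: "W2 \<mu> \<nu> = sqrt (enn2real (Wc \<mu> \<nu>))"
  unfolding W2_def Wc_def cost_def ..

lemma W2_pos_fin: "0 < W2 \<mu> \<nu> \<Longrightarrow> Wc \<mu> \<nu> < \<infinity>"
  unfolding W2_Wc by (cases "Wc \<mu> \<nu>" rule: ennreal_cases) auto

lemma W2_nonneg: "0 \<le> W2 \<mu> \<nu>"
  unfolding W2_Wc by simp

lemma W2_zero: "W2 \<mu> \<nu> = 0 \<Longrightarrow> Wc \<mu> \<nu> < \<infinity> \<Longrightarrow> Wc \<mu> \<nu> = 0"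
  unfolding W2_Wc by (cases "Wc \<mu> \<nu>" rule: ennreal_cases) auto

lemma W2_mono: "Wc a b \<le> Wc c d \<Longrightarrow> Wc c d < \<infinity> \<Longrightarrow> W2 a b \<le> W2 c d"
  unfolding W2_Wc by (auto intro!: enn2real_mono)

lemma Wc_fst_le:
  fixes \<nu> \<mu> :: "('a::euclidean_space \<times> 'a) measure"
  shows "Wc (distr \<nu> borel fst) (distr \<mu> borel fst) \<le> Wc \<nu> \<mu>"
  unfolding Wc_def
proof (rule INF_greatest)
  fix \<pi> assume \<pi>: "\<pi> \<in> couplings \<nu> \<mu>"
  then have [measurable_cong]: "sets \<pi> = sets borel" and ps: "prob_space \<pi>"
    and m1: "distr \<pi> borel fst = \<nu>" and m2: "distr \<pi> borel snd = \<mu>"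
    by (auto simp: couplings_def)
  define g :: "(('a \<times> 'a) \<times> ('a \<times> 'a)) \<Rightarrow> ('a \<times> 'a)" where "g p = (fst (fst p), fst (snd p))" for p
  have g[measurable]: "g \<in> \<pi> \<rightarrow>\<^sub>M borel" unfolding g_def by measurable
  have "distr \<pi> borel g \<in> couplings (distr \<nu> borel fst) (distr \<mu> borel fst)"
    unfolding couplings_def
  proof (intro CollectI conjI)
    show "prob_space (distr \<pi> borel g)" by (intro prob_space.prob_space_distr ps g)
    show "distr (distr \<pi> borel g) borel fst = distr \<nu> borel fst"
      unfolding m1[symmetric] by (subst (1 2) distr_distr) (auto simp: g_def comp_def)
    show "distr (distr \<pi> borel g) borel snd = distr \<mu> borel fst"
      unfolding m2[symmetric] by (subst (1 2) distr_distr) (auto simp: g_def comp_def)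
  qed simp
  then have "(INF \<pi>\<in>couplings (distr \<nu> borel fst) (distr \<mu> borel fst). cost \<pi>) \<le> cost (distr \<pi> borel g)"
    by (rule INF_lower)
  also have "\<dots> = (\<integral>\<^sup>+p. ennreal ((dist (fst (fst p)) (fst (snd p)))\<^sup>2) \<partial>\<pi>)"
    unfolding cost_def by (subst nn_integral_distr) (auto simp: g_def)
  also have "\<dots> \<le> cost \<pi>"
    unfolding cost_def
    by (intro nn_integral_mono ennreal_leI power_mono dist_fst_le) auto
  finally show "(INF \<pi>\<in>couplings (distr \<nu> borel fst) (distr \<mu> borel fst). cost \<pi>) \<le> cost \<pi>" .
qed

lemma Wc_swap_le:
  fixes a b :: "('a::euclidean_space) measure"
  shows "Wc b a \<le> Wc a b"
  unfolding Wc_def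
proof (rule INF_greatest)
  fix \<pi> assume \<pi>: "\<pi> \<in> couplings a b"
  then have [measurable_cong]: "sets \<pi> = sets borel" and ps: "prob_space \<pi>"
    and m1: "distr \<pi> borel fst = a" and m2: "distr \<pi> borel snd = b"
    by (auto simp: couplings_def)
  have g[measurable]: "(\<lambda>p::'a\<times>'a. (snd p, fst p)) \<in> \<pi> \<rightarrow>\<^sub>M borel" by measurable
  have "distr \<pi> borel (\<lambda>p. (snd p, fst p)) \<in> couplings b a"
    unfolding couplings_def
  proof (intro CollectI conjI)
    show "prob_space (distr \<pi> borel (\<lambda>p. (snd p, fst p)))" by (intro prob_space.prob_space_distr ps g)
    show "distr (distr \<pi> borel (\<lambda>p. (snd p, fst p))) borel fst = b"
      unfolding m2[symmetric] by (subst distr_distr) (auto simp: comp_def)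
    show "distr (distr \<pi> borel (\<lambda>p. (snd p, fst p))) borel snd = a"
      unfolding m1[symmetric] by (subst distr_distr) (auto simp: comp_def)
  qed simp
  then have "(INF \<pi>\<in>couplings b a. cost \<pi>) \<le> cost (distr \<pi> borel (\<lambda>p. (snd p, fst p)))"
    by (rule INF_lower)
  also have "\<dots> = cost \<pi>"
    unfolding cost_def by (subst nn_integral_distr) (auto simp: dist_commute)
  finally show "(INF \<pi>\<in>couplings b a. cost \<pi>) \<le> cost \<pi>" .
qed

lemma real_le_inv_Suc_imp_le0:
  fixes y :: real assumes "\<And>n. y \<le> 1 / real (Suc n)" shows "y \<le> 0"
proof (rule ccontr)
  assume "\<not> y \<le> 0"
  then have "0 < y" by simp
  from reals_Archimedean[OF this] obtain n where "inverse (real (Suc n)) < y" ..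
  with assms[of n] show False by (simp add: inverse_eq_divide)
qed

lemma Wc_zero_le_closed:
  fixes a b :: "('a::euclidean_space) measure"
  assumes W: "Wc a b = 0" and C: "closed C"
    and sa: "sets a = sets borel" and sb: "sets b = sets borel" and pb: "prob_space b"
  shows "emeasure a C \<le> emeasure b C"
proof (cases "C = {}")
  case True then show ?thesis by simp
next
  case False
  have [measurable]: "(\<lambda>x. infdist x C) \<in> borel_measurable borel"
    by (intro borel_measurable_continuous_onI continuous_intros)
  have Cb[measurable]: "C \<in> sets borel" using C by (simp add: borel_closed)
  define D where "D n = {x. infdist x C \<le> 1 / real (Suc n)}" for n
  have Db[measurable]: "D n \<in> sets borel" for n unfolding D_def by measurable
  have step: "emeasure a C \<le> emeasure b (D n)" for n
  proof (rule ennreal_le_epsilon)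
    fix s :: real assume "0 < s"
    define e where "e = 1 / real (Suc n)"
    have e: "0 < e" by (simp add: e_def)
    have "Wc a b < ennreal (s * e\<^sup>2)" using W \<open>0 < s\<close> e by simp
    then obtain \<gamma> where \<gamma>: "\<gamma> \<in> couplings a b" and c: "cost \<gamma> < ennreal (s * e\<^sup>2)"
      unfolding Wc_def by (auto simp: INF_less_iff)
    then have [measurable_cong]: "sets \<gamma> = sets borel" and ps: "prob_space \<gamma>"
      and m1: "distr \<gamma> borel fst = a" and m2: "distr \<gamma> borel snd = b"
      by (auto simp: couplings_def)
    define S where "S = {p::'a\<times>'a. e < dist (fst p) (snd p)}"
    have Sb[measurable]: "S \<in> sets \<gamma>" unfolding S_def by measurable
    have aC: "emeasure a C = emeasure \<gamma> (fst -` C \<inter> space \<gamma>)"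
      unfolding m1[symmetric] by (subst emeasure_distr) auto
    have bD: "emeasure b (D n) = emeasure \<gamma> (snd -` D n \<inter> space \<gamma>)"
      unfolding m2[symmetric] by (subst emeasure_distr) auto
    have sub: "fst -` C \<inter> space \<gamma> \<subseteq> (snd -` D n \<inter> space \<gamma>) \<union> S"
    proof
      fix p assume p: "p \<in> fst -` C \<inter> space \<gamma>"
      show "p \<in> (snd -` D n \<inter> space \<gamma>) \<union> S"
      proof (cases "p \<in> S")
        case False
        then have "dist (fst p) (snd p) \<le> e" by (simp add: S_def)
        moreover have "infdist (snd p) C \<le> dist (snd p) (fst p)" using p by (intro infdist_le) auto
        ultimately show ?thesis using p by (auto simp: D_def e_def dist_commute)
      qed simp
    qed
    have "ennreal (e\<^sup>2) * emeasure \<gamma> S = (\<integral>\<^sup>+p. ennreal (e\<^sup>2) * indicator S p \<partial>\<gamma>)"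
      by (subst nn_integral_cmult_indicator) auto
    also have "\<dots> \<le> cost \<gamma>"
      unfolding cost_def
    proof (intro nn_integral_mono)
      fix p show "ennreal (e\<^sup>2) * indicator S p \<le> ennreal ((dist (fst p) (snd p))\<^sup>2)"
        using e by (auto simp: S_def indicator_def intro!: ennreal_leI power_mono)
    qed
    finally have lt: "ennreal (e\<^sup>2) * emeasure \<gamma> S < ennreal (e\<^sup>2) * ennreal s"
      using c e \<open>0 < s\<close> by (simp add: ennreal_mult' mult.commute)
    have Sl: "emeasure \<gamma> S \<le> ennreal s"
    proof (rule ccontr)
      assume "\<not> emeasure \<gamma> S \<le> ennreal s"
      then have "ennreal s \<le> emeasure \<gamma> S" by simp
      then have "ennreal (e\<^sup>2) * ennreal s \<le> ennreal (e\<^sup>2) * emeasure \<gamma> S" by (rule mult_left_mono) simp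
      with lt show False by simp
    qed
    have "emeasure a C \<le> emeasure \<gamma> ((snd -` D n \<inter> space \<gamma>) \<union> S)"
      unfolding aC by (intro emeasure_mono sub) measurable
    also have "\<dots> \<le> emeasure \<gamma> (snd -` D n \<inter> space \<gamma>) + emeasure \<gamma> S"
      by (intro emeasure_subadditive) measurable
    also have "\<dots> \<le> emeasure b (D n) + ennreal s"
      unfolding bD using Sl by (intro add_left_mono)
    finally show "emeasure a C \<le> emeasure b (D n) + ennreal s" .
  qed
  have eqC: "(\<Inter>n. D n) = C"
  proof safe
    fix x assume "x \<in> (\<Inter>n. D n)"
    then have "infdist x C \<le> 0" by (intro real_le_inv_Suc_imp_le0) (auto simp: D_def)
    then have "infdist x C = 0" using infdist_nonneg[of x C] by linarith
    then show "x \<in> C" using in_closure_iff_infdist_zero[OF False] C by (simp add: closure_closed)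
  next
    fix x n assume "x \<in> C" then show "x \<in> D n" by (simp add: D_def infdist_zero)
  qed
  have "emeasure a C \<le> (INF n. emeasure b (D n))"
    using step by (intro INF_greatest) auto
  also have "\<dots> = emeasure b (\<Inter>n. D n)"
  proof (rule INF_emeasure_decseq)
    show "range D \<subseteq> sets b" unfolding sb using Db by blast
    show "decseq D"
    proof (rule decseq_SucI)
      fix n
      have "1 / real (Suc (Suc n)) \<le> 1 / real (Suc n)" by (intro divide_left_mono) auto
      then show "D (Suc n) \<le> D n" unfolding D_def by auto
    qed
    interpret b: prob_space b by fact
    show "emeasure b (D n) \<noteq> \<infinity>" for n using b.emeasure_finite by simp
  qed
  also have "\<dots> = emeasure b C" using eqC by simp
  finally show ?thesis .
qed

lemma Wc_zero_eq:
  fixes a b :: "('a::euclidean_space) measure"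
  assumes W: "Wc a b = 0"
    and sa: "sets a = sets borel" and sb: "sets b = sets borel" and pa: "prob_space a" and pb: "prob_space b"
  shows "a = b"
proof (rule measure_eqI_generator_eq[where E = "Collect closed" and \<Omega> = UNIV and A = "\<lambda>_. UNIV"])
  have W': "Wc b a = 0" using Wc_swap_le[of b a] W by simp
  show "Int_stable (Collect closed)" by (auto simp: Int_stable_def)
  show "Collect closed \<subseteq> Pow UNIV" by simp
  show "emeasure a X = emeasure b X" if "X \<in> Collect closed" for X
    using that Wc_zero_le_closed[OF W _ sa sb pb] Wc_zero_le_closed[OF W' _ sb sa pa]
    by (auto intro: antisym)
  show "sets a = sigma_sets UNIV (Collect closed)"
    unfolding sa by (subst borel_eq_closed) (simp add: sets_measure_of)
  show "sets b = sigma_sets UNIV (Collect closed)"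
    unfolding sb by (subst borel_eq_closed) (simp add: sets_measure_of)
  show "range (\<lambda>_. UNIV) \<subseteq> Collect closed" by simp
  show "(\<Union>i. UNIV) = UNIV" by simp
  show "emeasure a UNIV \<noteq> \<infinity>" for i::nat
    using prob_space.emeasure_space_1[OF pa] sets_eq_imp_space_eq[OF sa] by simp
qed

lemma inv_mult_self_ennreal: "(x::ennreal) \<noteq> 0 \<Longrightarrow> x < top \<Longrightarrow> 1 / x * x = 1"
  by (simp add: ennreal_divide_times)

lemma glue:
  fixes \<mu> \<gamma> :: "('a::euclidean_space \<times> 'a) measure" and cell :: "'a \<Rightarrow> 'k::countable"
  assumes p\<mu>: "prob_space \<mu>" and s\<mu>[measurable_cong]: "sets \<mu> = sets borel"
    and p\<gamma>: "prob_space \<gamma>" and s\<gamma>[measurable_cong]: "sets \<gamma> = sets borel"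
    and marg: "distr \<gamma> borel snd = distr \<mu> borel fst"
    and cellm[measurable]: "cell \<in> borel \<rightarrow>\<^sub>M count_space UNIV"
    and w_def: "w = (\<lambda>p. if cell (fst (fst p)) = cell (snd (snd p))
                     then 1 / emeasure (distr \<mu> borel fst) (cell -` {cell (fst (fst p))}) else 0)"
  shows "w \<in> borel_measurable (\<mu> \<Otimes>\<^sub>M \<gamma>)"
    and "distr (density (\<mu> \<Otimes>\<^sub>M \<gamma>) w) borel fst = \<mu>"
    and "distr (density (\<mu> \<Otimes>\<^sub>M \<gamma>) w) borel snd = \<gamma>"
proof -
  interpret \<mu>: prob_space \<mu> by fact
  interpret \<gamma>: prob_space \<gamma> by fact
  interpret P: pair_prob_space \<mu> \<gamma> by unfold_locales
  define \<rho> where "\<rho> = distr \<mu> borel fst"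
  have p\<rho>: "prob_space \<rho>" unfolding \<rho>_def by (intro \<mu>.prob_space_distr) simp
  interpret \<rho>: prob_space \<rho> by fact
  have s\<rho>[measurable_cong]: "sets \<rho> = sets borel" unfolding \<rho>_def by simp
  define A where "A k = cell -` {k}" for k
  have Ab[measurable]: "A k \<in> sets borel" for k
    unfolding A_def using measurable_sets[OF cellm, of "{k}"] by simp
  define c where "c k = 1 / emeasure \<rho> (A k)" for k
  have w_eq: "w = (\<lambda>p. (\<lambda>k p. if k = cell (snd (snd p)) then c k else 0) (cell (fst (fst p))) p)"
    unfolding w_def c_def A_def \<rho>_def by (auto simp: fun_eq_iff)
  show wm[measurable]: "w \<in> borel_measurable (\<mu> \<Otimes>\<^sub>M \<gamma>)"
    unfolding w_eq
    by (rule measurable_compose_countable) measurable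
  define \<Gamma> where "\<Gamma> = density (\<mu> \<Otimes>\<^sub>M \<gamma>) w"
  have s\<Gamma>[measurable_cong]: "sets \<Gamma> = sets (\<mu> \<Otimes>\<^sub>M \<gamma>)" unfolding \<Gamma>_def by simp
  have sp\<Gamma>: "space \<Gamma> = space (\<mu> \<Otimes>\<^sub>M \<gamma>)" unfolding \<Gamma>_def by simp
  define N where "N = (\<Union>k\<in>{k. emeasure \<rho> (A k) = 0}. A k)"
  have "N \<in> null_sets \<rho>"
    unfolding N_def
  proof (rule null_sets_UN')
    show "countable {k. emeasure \<rho> (A k) = 0}" by simp
    fix k assume "k \<in> {k. emeasure \<rho> (A k) = 0}"
    then show "A k \<in> null_sets \<rho>" using Ab[of k] s\<rho> by (simp add: null_sets_def)
  qed
  then have AE\<rho>: "AE y in \<rho>. emeasure \<rho> (A (cell y)) \<noteq> 0"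
    by (rule AE_mp[OF AE_not_in]) (auto simp: N_def A_def)
  have predm: "{y \<in> space \<rho>. emeasure \<rho> (A (cell y)) \<noteq> 0} \<in> sets \<rho>"
  proof -
    have "{y \<in> space \<rho>. emeasure \<rho> (A (cell y)) \<noteq> 0} = cell -` {k. emeasure \<rho> (A k) \<noteq> 0} \<inter> space borel"
      using sets_eq_imp_space_eq[OF s\<rho>] by auto
    also have "\<dots> \<in> sets borel" by (rule measurable_sets[OF cellm]) simp
    finally show ?thesis unfolding s\<rho> .
  qed
  have cA: "c k * emeasure \<rho> (A k) = 1" if "emeasure \<rho> (A k) \<noteq> 0" for k
  proof -
    have "emeasure \<rho> (A k) < top" using \<rho>.emeasure_finite[of "A k"] top.not_eq_extremum by blast
    then show ?thesis unfolding c_def using that by (intro inv_mult_self_ennreal)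
  qed
  show "distr (density (\<mu> \<Otimes>\<^sub>M \<gamma>) w) borel fst = \<mu>"
    unfolding \<Gamma>_def[symmetric]
  proof (rule measure_eqI)
    show "sets (distr \<Gamma> borel fst) = sets \<mu>" by (simp add: s\<mu>)
    fix B assume "B \<in> sets (distr \<Gamma> borel fst)"
    then have Bb[measurable]: "B \<in> sets borel" by simp
    have AE\<mu>: "AE q in \<mu>. emeasure \<rho> (A (cell (fst q))) \<noteq> 0"
      using AE\<rho> unfolding \<rho>_def by (subst (asm) AE_distr_iff) (auto simp: predm[unfolded \<rho>_def])
    have inner: "(\<integral>\<^sup>+z. w (q, z) * indicator B q \<partial>\<gamma>) = indicator B q"
      if q: "emeasure \<rho> (A (cell (fst q))) \<noteq> 0" for q
    proof -
      define k where "k = cell (fst q)"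
      have "(\<integral>\<^sup>+z. w (q, z) * indicator B q \<partial>\<gamma>) = (\<integral>\<^sup>+z. (c k * indicator B q) * indicator (snd -` A k \<inter> space \<gamma>) z \<partial>\<gamma>)"
        by (intro nn_integral_cong) (auto simp: w_eq k_def A_def indicator_def)
      also have "\<dots> = (c k * indicator B q) * emeasure \<gamma> (snd -` A k \<inter> space \<gamma>)"
        by (rule nn_integral_cmult_indicator) measurable
      also have "emeasure \<gamma> (snd -` A k \<inter> space \<gamma>) = emeasure \<rho> (A k)"
        unfolding \<rho>_def marg[symmetric] by (subst emeasure_distr) auto
      finally show ?thesis using cA[of k] q unfolding k_def
        by (simp add: mult.commute mult.left_commute)
    qed
    have "emeasure (distr \<Gamma> borel fst) B = emeasure \<Gamma> (fst -` B \<inter> space \<Gamma>)"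
      by (rule emeasure_distr) measurable
    also have "\<dots> = (\<integral>\<^sup>+p. w p * indicator (fst -` B \<inter> space \<Gamma>) p \<partial>(\<mu> \<Otimes>\<^sub>M \<gamma>))"
    proof -
      have "fst -` B \<inter> space \<Gamma> \<in> sets (\<mu> \<Otimes>\<^sub>M \<gamma>)"
        unfolding sp\<Gamma> by measurable
      then show ?thesis unfolding \<Gamma>_def by (rule emeasure_density[OF wm])
    qed
    also have "\<dots> = (\<integral>\<^sup>+p. w p * indicator B (fst p) \<partial>(\<mu> \<Otimes>\<^sub>M \<gamma>))"
      by (intro nn_integral_cong) (auto simp: sp\<Gamma> indicator_def)
    also have "\<dots> = (\<integral>\<^sup>+q. \<integral>\<^sup>+z. w (q, z) * indicator B q \<partial>\<gamma> \<partial>\<mu>)"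
    proof -
      have "(\<lambda>p. w p * indicator B (fst p)) \<in> borel_measurable (\<mu> \<Otimes>\<^sub>M \<gamma>)" by measurable
      from \<gamma>.nn_integral_fst[OF this] show ?thesis by simp
    qed
    also have "\<dots> = (\<integral>\<^sup>+q. indicator B q \<partial>\<mu>)"
      using AE\<mu> by (intro nn_integral_cong_AE) (elim AE_mp, intro AE_I2 impI inner)
    also have "\<dots> = emeasure \<mu> B"
      using Bb s\<mu> by (simp add: nn_integral_indicator)
    finally show "emeasure (distr \<Gamma> borel fst) B = emeasure \<mu> B" .
  qed
  show "distr (density (\<mu> \<Otimes>\<^sub>M \<gamma>) w) borel snd = \<gamma>"
    unfolding \<Gamma>_def[symmetric]
  proof (rule measure_eqI)
    show "sets (distr \<Gamma> borel snd) = sets \<gamma>" by (simp add: s\<gamma>)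
    fix B assume "B \<in> sets (distr \<Gamma> borel snd)"
    then have Bb[measurable]: "B \<in> sets borel" by simp
    have AE\<gamma>: "AE z in \<gamma>. emeasure \<rho> (A (cell (snd z))) \<noteq> 0"
      using AE\<rho> unfolding \<rho>_def marg[symmetric] by (subst (asm) AE_distr_iff) (auto simp: predm[unfolded \<rho>_def marg[symmetric]])
    have inner: "(\<integral>\<^sup>+q. w (q, z) * indicator B z \<partial>\<mu>) = indicator B z"
      if z: "emeasure \<rho> (A (cell (snd z))) \<noteq> 0" for z
    proof -
      define k where "k = cell (snd z)"
      have "(\<integral>\<^sup>+q. w (q, z) * indicator B z \<partial>\<mu>) = (\<integral>\<^sup>+q. (c k * indicator B z) * indicator (fst -` A k \<inter> space \<mu>) q \<partial>\<mu>)"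
        by (intro nn_integral_cong) (auto simp: w_eq k_def A_def indicator_def)
      also have "\<dots> = (c k * indicator B z) * emeasure \<mu> (fst -` A k \<inter> space \<mu>)"
        by (rule nn_integral_cmult_indicator) measurable
      also have "emeasure \<mu> (fst -` A k \<inter> space \<mu>) = emeasure \<rho> (A k)"
        unfolding \<rho>_def by (subst emeasure_distr) auto
      finally show ?thesis using cA[of k] z unfolding k_def
        by (simp add: mult.commute mult.left_commute)
    qed
    have "emeasure (distr \<Gamma> borel snd) B = emeasure \<Gamma> (snd -` B \<inter> space \<Gamma>)"
      by (rule emeasure_distr) measurable
    also have "\<dots> = (\<integral>\<^sup>+p. w p * indicator (snd -` B \<inter> space \<Gamma>) p \<partial>(\<mu> \<Otimes>\<^sub>M \<gamma>))"
    proof -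
      have "snd -` B \<inter> space \<Gamma> \<in> sets (\<mu> \<Otimes>\<^sub>M \<gamma>)"
        unfolding sp\<Gamma> by measurable
      then show ?thesis unfolding \<Gamma>_def by (rule emeasure_density[OF wm])
    qed
    also have "\<dots> = (\<integral>\<^sup>+p. w p * indicator B (snd p) \<partial>(\<mu> \<Otimes>\<^sub>M \<gamma>))"
      by (intro nn_integral_cong) (auto simp: sp\<Gamma> indicator_def)
    also have "\<dots> = (\<integral>\<^sup>+z. \<integral>\<^sup>+q. w (q, z) * indicator B z \<partial>\<mu> \<partial>\<gamma>)"
    proof -
      have "(\<lambda>p. w p * indicator B (snd p)) \<in> borel_measurable (\<mu> \<Otimes>\<^sub>M \<gamma>)" by measurable
      from P.nn_integral_snd[OF this] show ?thesis by simp
    qed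
    also have "\<dots> = (\<integral>\<^sup>+z. indicator B z \<partial>\<gamma>)"
      using AE\<gamma> by (intro nn_integral_cong_AE) (elim AE_mp, intro AE_I2 impI inner)
    also have "\<dots> = emeasure \<gamma> B"
      using Bb s\<gamma> by (simp add: nn_integral_indicator)
    finally show "emeasure (distr \<Gamma> borel snd) B = emeasure \<gamma> B" .
  qed
qed

definition cellf :: "real \<Rightarrow> 'a::euclidean_space \<Rightarrow> int list" where
  "cellf h x = map (\<lambda>b. \<lfloor>(x \<bullet> b) / h\<rfloor>) (SOME bs. set bs = Basis \<and> distinct bs)"

lemma cellf_bs: "set (SOME bs. set bs = (Basis::'a::euclidean_space set) \<and> distinct bs) = Basis"
  using someI_ex[OF finite_distinct_list[OF finite_Basis[where 'a='a]]] by blast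

lemma cellf_measurable[measurable]: "cellf h \<in> (borel :: ('a::euclidean_space) measure) \<rightarrow>\<^sub>M count_space UNIV"
proof (subst measurable_count_space_eq2_countable, safe)
  fix k :: "int list"
  define bs where "bs = (SOME bs. set bs = (Basis::'a set) \<and> distinct bs)"
  have "cellf h -` {k} \<inter> space (borel::'a measure) =
      (if length k = length bs then {x. \<forall>i<length bs. \<lfloor>(x \<bullet> (bs!i)) / h\<rfloor> = k!i} else {})"
    by (auto simp: cellf_def bs_def[symmetric] list_eq_iff_nth_eq)
  also have "\<dots> \<in> sets borel"
  proof -
    have "Measurable.pred borel (\<lambda>x::'a. \<forall>i<length bs. \<lfloor>(x \<bullet> (bs!i)) / h\<rfloor> = k!i)" by measurable
    then have "{x::'a. \<forall>i<length bs. \<lfloor>(x \<bullet> (bs!i)) / h\<rfloor> = k!i} \<in> sets borel" by (simp add: pred_def)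
    then show ?thesis by simp
  qed
  finally show "cellf h -` {k} \<inter> space (borel::'a measure) \<in> sets borel" .
qed simp

lemma cellf_dist:
  fixes x y :: "'a::euclidean_space"
  assumes h: "0 < h" and eq: "cellf h x = cellf h y"
  shows "dist x y \<le> real DIM('a) * h"
proof -
  define bs where "bs = (SOME bs. set bs = (Basis::'a set) \<and> distinct bs)"
  have bsB: "set bs = Basis" unfolding bs_def by (rule cellf_bs)
  have fl: "\<lfloor>(x \<bullet> b) / h\<rfloor> = \<lfloor>(y \<bullet> b) / h\<rfloor>" if "b \<in> Basis" for b
  proof -
    from that bsB obtain i where i: "i < length bs" "bs ! i = b" by (metis in_set_conv_nth)
    from eq have "cellf h x ! i = cellf h y ! i" by simp
    then show ?thesis using i by (simp add: cellf_def bs_def[symmetric])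
  qed
  have comp: "\<bar>(x - y) \<bullet> b\<bar> \<le> h" if "b \<in> Basis" for b
  proof -
    have "\<bar>(x \<bullet> b) / h - (y \<bullet> b) / h\<bar> < 1"
      using fl[OF that] by linarith
    then have "\<bar>(x \<bullet> b) - (y \<bullet> b)\<bar> / h < 1" using h by (simp add: diff_divide_distrib[symmetric])
    then show ?thesis using h by (simp add: inner_diff_left field_simps)
  qed
  have "dist x y = norm (x - y)" by (simp add: dist_norm)
  also have "\<dots> \<le> (\<Sum>b\<in>Basis. \<bar>(x - y) \<bullet> b\<bar>)" by (rule norm_le_l1)
  also have "\<dots> \<le> (\<Sum>b\<in>(Basis::'a set). h)" by (intro sum_mono comp)
  also have "\<dots> = real DIM('a) * h" by simp
  finally show ?thesis .
qed

lemma sq_split_ineq: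
  fixes a b t :: real assumes "0 < t"
  shows "(a + b)\<^sup>2 \<le> (1 + t) * a\<^sup>2 + (1 + 1 / t) * b\<^sup>2"
proof -
  have "0 \<le> (t * a - b)\<^sup>2" by simp
  then have "2 * a * b * t \<le> t\<^sup>2 * a\<^sup>2 + b\<^sup>2" by (simp add: power2_eq_square algebra_simps)
  then have "2 * a * b \<le> t * a\<^sup>2 + b\<^sup>2 / t" using assms
    by (simp add: field_simps power2_eq_square)
  then show ?thesis by (simp add: power2_eq_square algebra_simps)
qed

lemma construct:
  fixes \<mu> :: "('a::euclidean_space \<times> 'a) measure" and \<rho>' :: "'a measure"
    and \<gamma> :: "('a \<times> 'a) measure"
  assumes mu: "\<mu> \<in> P2" and rho': "\<rho>' \<in> P2" and gam: "\<gamma> \<in> couplings \<rho>' (distr \<mu> borel fst)"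
    and \<eta>: "0 < \<eta>" and t: "0 < t"
  shows "\<exists>\<nu>\<in>P2. distr \<nu> borel fst = \<rho>' \<and>
            Wc \<nu> \<mu> \<le> ennreal (1 + t) * cost \<gamma> + ennreal ((1 + 1 / t) * \<eta>\<^sup>2)"
proof -
  have p\<mu>: "prob_space \<mu>" and s\<mu>[measurable_cong]: "sets \<mu> = sets borel"
    and mom\<mu>: "(\<integral>\<^sup>+x. ennreal ((norm x)\<^sup>2) \<partial>\<mu>) < \<infinity>" using mu unfolding P2_def by blast+
  have s\<rho>'[measurable_cong]: "sets \<rho>' = sets borel"
    and mom\<rho>': "(\<integral>\<^sup>+x. ennreal ((norm x)\<^sup>2) \<partial>\<rho>') < \<infinity>" using rho' unfolding P2_def by blast+
  have p\<gamma>: "prob_space \<gamma>" and s\<gamma>[measurable_cong]: "sets \<gamma> = sets borel"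
    and m1: "distr \<gamma> borel fst = \<rho>'" and m2: "distr \<gamma> borel snd = distr \<mu> borel fst"
    using gam unfolding couplings_def by blast+
  define h where "h = \<eta> / real DIM('a)"
  have h: "0 < h" using \<eta> by (simp add: h_def)
  have hD: "real DIM('a) * h = \<eta>" by (simp add: h_def)
  define w where "w = (\<lambda>p::('a\<times>'a)\<times>('a\<times>'a). if cellf h (fst (fst p)) = cellf h (snd (snd p))
                     then 1 / emeasure (distr \<mu> borel fst) (cellf h -` {cellf h (fst (fst p))}) else 0)"
  note G = glue[OF p\<mu> s\<mu> p\<gamma> s\<gamma> m2 cellf_measurable w_def]
  have wm[measurable]: "w \<in> borel_measurable (\<mu> \<Otimes>\<^sub>M \<gamma>)" by (rule G(1))
  define \<Gamma> where "\<Gamma> = density (\<mu> \<Otimes>\<^sub>M \<gamma>) w"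
  have GF: "distr \<Gamma> borel fst = \<mu>" unfolding \<Gamma>_def by (rule G(2))
  have GS: "distr \<Gamma> borel snd = \<gamma>" unfolding \<Gamma>_def by (rule G(3))
  have s\<Gamma>[measurable_cong]: "sets \<Gamma> = sets (\<mu> \<Otimes>\<^sub>M \<gamma>)" unfolding \<Gamma>_def by simp
  have one: "emeasure \<Gamma> (space \<Gamma>) = 1"
  proof -
    have "emeasure (distr \<Gamma> borel fst) UNIV = emeasure \<Gamma> (fst -` UNIV \<inter> space \<Gamma>)"
      by (rule emeasure_distr) measurable
    then have "emeasure \<Gamma> (space \<Gamma>) = emeasure (distr \<Gamma> borel fst) UNIV" by simp
    also have "\<dots> = 1" unfolding GF
      using prob_space.emeasure_space_1[OF p\<mu>] sets_eq_imp_space_eq[OF s\<mu>] by simp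
    finally show ?thesis .
  qed
  have p\<Gamma>: "prob_space \<Gamma>" by (rule prob_spaceI) (rule one)
  interpret \<Gamma>: prob_space \<Gamma> by fact
  define F where "F p = ((fst (snd p), snd (fst p)), fst p)" for p :: "('a\<times>'a)\<times>('a\<times>'a)"
  have Fm[measurable]: "F \<in> \<Gamma> \<rightarrow>\<^sub>M borel" unfolding F_def by measurable
  define \<pi> where "\<pi> = distr \<Gamma> borel F"
  define \<nu> where "\<nu> = distr \<Gamma> borel (\<lambda>p. (fst (snd p), snd (fst p)))"
  have \<pi>1: "distr \<pi> borel fst = \<nu>"
    unfolding \<pi>_def \<nu>_def by (subst distr_distr) (auto simp: comp_def F_def)
  have \<pi>2: "distr \<pi> borel snd = \<mu>"
    unfolding \<pi>_def GF[symmetric] by (subst distr_distr) (auto simp: comp_def F_def)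
  have \<nu>1: "distr \<nu> borel fst = \<rho>'"
  proof -
    have "distr \<nu> borel fst = distr \<Gamma> borel (\<lambda>p. fst (snd p))"
      unfolding \<nu>_def by (subst distr_distr) (auto simp: comp_def)
    also have "\<dots> = distr (distr \<Gamma> borel snd) borel fst"
      by (subst distr_distr) (auto simp: comp_def)
    finally show ?thesis using GS m1 by simp
  qed
  have s\<nu>[measurable_cong]: "sets \<nu> = sets borel" unfolding \<nu>_def by simp
  have p\<nu>: "prob_space \<nu>" unfolding \<nu>_def by (intro \<Gamma>.prob_space_distr) measurable
  have int_snd: "(\<integral>\<^sup>+p. f (snd p) \<partial>\<Gamma>) = (\<integral>\<^sup>+z. f z \<partial>\<gamma>)" if [measurable]: "f \<in> borel_measurable borel" for f
  proof -
    have "(\<integral>\<^sup>+z. f z \<partial>\<gamma>) = (\<integral>\<^sup>+z. f z \<partial>(distr \<Gamma> borel snd))" using GS by simp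
    also have "\<dots> = (\<integral>\<^sup>+p. f (snd p) \<partial>\<Gamma>)" by (rule nn_integral_distr) measurable
    finally show ?thesis ..
  qed
  have int_fst: "(\<integral>\<^sup>+p. f (fst p) \<partial>\<Gamma>) = (\<integral>\<^sup>+q. f q \<partial>\<mu>)" if [measurable]: "f \<in> borel_measurable borel" for f
  proof -
    have "(\<integral>\<^sup>+q. f q \<partial>\<mu>) = (\<integral>\<^sup>+q. f q \<partial>(distr \<Gamma> borel fst))" using GF by simp
    also have "\<dots> = (\<integral>\<^sup>+p. f (fst p) \<partial>\<Gamma>)" by (rule nn_integral_distr) measurable
    finally show ?thesis ..
  qed
  have \<nu>P2: "\<nu> \<in> P2"
  proof -
    have e1: "(\<integral>\<^sup>+x. ennreal ((norm x)\<^sup>2) \<partial>\<nu>) = (\<integral>\<^sup>+p. ennreal ((norm (fst (snd p), snd (fst p)))\<^sup>2) \<partial>\<Gamma>)"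
      unfolding \<nu>_def by (rule nn_integral_distr) measurable
    have e2: "ennreal ((norm (fst (snd p), snd (fst p)))\<^sup>2) = ennreal ((norm (fst (snd p)))\<^sup>2) + ennreal ((norm (snd (fst p)))\<^sup>2)" for p :: "('a\<times>'a)\<times>('a\<times>'a)"
    proof -
      have "(norm (fst (snd p), snd (fst p)))\<^sup>2 = (norm (fst (snd p)))\<^sup>2 + (norm (snd (fst p)))\<^sup>2"
        unfolding norm_prod_def by simp
      then show ?thesis by (simp add: ennreal_plus)
    qed
    have e3: "(\<integral>\<^sup>+p. ennreal ((norm (fst (snd p)))\<^sup>2) + ennreal ((norm (snd (fst p)))\<^sup>2) \<partial>\<Gamma>) = (\<integral>\<^sup>+p. ennreal ((norm (fst (snd p)))\<^sup>2) \<partial>\<Gamma>) + (\<integral>\<^sup>+p. ennreal ((norm (snd (fst p)))\<^sup>2) \<partial>\<Gamma>)"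
      by (rule nn_integral_add) measurable
    have e4: "(\<integral>\<^sup>+p. ennreal ((norm (fst (snd p)))\<^sup>2) \<partial>\<Gamma>) = (\<integral>\<^sup>+z. ennreal ((norm (fst z))\<^sup>2) \<partial>\<gamma>)"
      by (rule int_snd[of "\<lambda>z. ennreal ((norm (fst z))\<^sup>2)"]) measurable
    have e5': "(\<integral>\<^sup>+x. ennreal ((norm x)\<^sup>2) \<partial>\<rho>') = (\<integral>\<^sup>+z. ennreal ((norm (fst z))\<^sup>2) \<partial>\<gamma>)"
      unfolding m1[symmetric] by (rule nn_integral_distr) measurable
    note e5 = e5'[symmetric]
    have e6: "(\<integral>\<^sup>+p. ennreal ((norm (snd (fst p)))\<^sup>2) \<partial>\<Gamma>) = (\<integral>\<^sup>+q. ennreal ((norm (snd q))\<^sup>2) \<partial>\<mu>)"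
      by (rule int_fst[of "\<lambda>q. ennreal ((norm (snd q))\<^sup>2)"]) measurable
    have e7: "(\<integral>\<^sup>+q. ennreal ((norm (snd q))\<^sup>2) \<partial>\<mu>) \<le> (\<integral>\<^sup>+q. ennreal ((norm q)\<^sup>2) \<partial>\<mu>)"
    proof (intro nn_integral_mono ennreal_leI power_mono)
      fix q :: "'a \<times> 'a"
      show "norm (snd q) \<le> norm q" using norm_snd_le[of "snd q" "fst q"] by simp
    qed simp
    have "(\<integral>\<^sup>+x. ennreal ((norm x)\<^sup>2) \<partial>\<nu>) = (\<integral>\<^sup>+x. ennreal ((norm x)\<^sup>2) \<partial>\<rho>') + (\<integral>\<^sup>+q. ennreal ((norm (snd q))\<^sup>2) \<partial>\<mu>)"
      unfolding e1 e2 e3 e4 e5 e6 ..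
    also have "\<dots> \<le> (\<integral>\<^sup>+x. ennreal ((norm x)\<^sup>2) \<partial>\<rho>') + (\<integral>\<^sup>+q. ennreal ((norm q)\<^sup>2) \<partial>\<mu>)"
      using e7 by (rule add_left_mono)
    also have "\<dots> < \<infinity>" using mom\<rho>' mom\<mu> by (simp add: less_top)
    finally have "(\<integral>\<^sup>+x. ennreal ((norm x)\<^sup>2) \<partial>\<nu>) < \<infinity>" .
    then show ?thesis using p\<nu> s\<nu> unfolding P2_def by blast
  qed
  have \<pi>c: "\<pi> \<in> couplings \<nu> \<mu>"
    unfolding couplings_def
  proof (intro CollectI conjI \<pi>1 \<pi>2)
    show "prob_space \<pi>" unfolding \<pi>_def by (rule \<Gamma>.prob_space_distr) (rule Fm)
    show "sets \<pi> = sets borel" unfolding \<pi>_def by simp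
  qed
  have AEc: "AE p in \<Gamma>. cellf h (fst (fst p)) = cellf h (snd (snd p))"
    unfolding \<Gamma>_def by (subst AE_density[OF wm]) (rule AE_I2, simp add: w_def split: if_splits)
  have "Wc \<nu> \<mu> \<le> cost \<pi>" unfolding Wc_def using \<pi>c by (rule INF_lower)
  also have "cost \<pi> = (\<integral>\<^sup>+p. ennreal ((dist (fst (snd p)) (fst (fst p)))\<^sup>2) \<partial>\<Gamma>)"
  proof -
    have dd: "dist (fst (snd p), snd (fst p)) (fst p) = dist (fst (snd p)) (fst (fst p))" for p :: "('a\<times>'a)\<times>('a\<times>'a)"
      using dist_Pair_Pair[of "fst (snd p)" "snd (fst p)" "fst (fst p)" "snd (fst p)"] by simp
    have "cost \<pi> = (\<integral>\<^sup>+p. ennreal ((dist (fst (F p)) (snd (F p)))\<^sup>2) \<partial>\<Gamma>)"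
      unfolding cost_def \<pi>_def by (rule nn_integral_distr) measurable
    then show ?thesis by (simp add: F_def dd)
  qed
  also have "\<dots> \<le> (\<integral>\<^sup>+p. ennreal (1 + t) * ennreal ((dist (fst (snd p)) (snd (snd p)))\<^sup>2) + ennreal ((1 + 1 / t) * \<eta>\<^sup>2) \<partial>\<Gamma>)"
  proof (rule nn_integral_mono_AE)
    show "AE p in \<Gamma>. ennreal ((dist (fst (snd p)) (fst (fst p)))\<^sup>2) \<le> ennreal (1 + t) * ennreal ((dist (fst (snd p)) (snd (snd p)))\<^sup>2) + ennreal ((1 + 1 / t) * \<eta>\<^sup>2)"
      using AEc
    proof eventually_elim
      case (elim p)
      define a where "a = dist (fst (snd p)) (snd (snd p))"
      define b where "b = dist (snd (snd p)) (fst (fst p))"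
      have b: "b \<le> \<eta>" unfolding b_def using cellf_dist[OF h elim[symmetric]] hD by simp
      have "dist (fst (snd p)) (fst (fst p)) \<le> a + b" unfolding a_def b_def by (rule dist_triangle)
      then have "(dist (fst (snd p)) (fst (fst p)))\<^sup>2 \<le> (a + b)\<^sup>2" by (intro power_mono) auto
      also have "\<dots> \<le> (1 + t) * a\<^sup>2 + (1 + 1 / t) * b\<^sup>2" by (rule sq_split_ineq[OF t])
      also have "\<dots> \<le> (1 + t) * a\<^sup>2 + (1 + 1 / t) * \<eta>\<^sup>2"
        using b t by (intro add_left_mono mult_left_mono power_mono) (auto simp: b_def)
      finally have "(dist (fst (snd p)) (fst (fst p)))\<^sup>2 \<le> (1 + t) * a\<^sup>2 + (1 + 1 / t) * \<eta>\<^sup>2" .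
      then have "ennreal ((dist (fst (snd p)) (fst (fst p)))\<^sup>2) \<le> ennreal ((1 + t) * a\<^sup>2 + (1 + 1 / t) * \<eta>\<^sup>2)"
        by (rule ennreal_leI)
      also have "ennreal ((1 + t) * a\<^sup>2 + (1 + 1 / t) * \<eta>\<^sup>2) = ennreal ((1 + t) * a\<^sup>2) + ennreal ((1 + 1 / t) * \<eta>\<^sup>2)"
        using t by (intro ennreal_plus) auto
      also have "ennreal ((1 + t) * a\<^sup>2) = ennreal (1 + t) * ennreal (a\<^sup>2)"
        using t by (intro ennreal_mult) auto
      finally show ?case unfolding a_def .
    qed
  qed
  also have "\<dots> = ennreal (1 + t) * (\<integral>\<^sup>+p. ennreal ((dist (fst (snd p)) (snd (snd p)))\<^sup>2) \<partial>\<Gamma>) + ennreal ((1 + 1 / t) * \<eta>\<^sup>2) * emeasure \<Gamma> (space \<Gamma>)"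
    by (subst nn_integral_add) (auto simp: nn_integral_cmult)
  also have "(\<integral>\<^sup>+p. ennreal ((dist (fst (snd p)) (snd (snd p)))\<^sup>2) \<partial>\<Gamma>) = cost \<gamma>"
    unfolding cost_def by (rule int_snd[of "\<lambda>z. ennreal ((dist (fst z) (snd z))\<^sup>2)"]) measurable
  finally show ?thesis using \<nu>P2 \<nu>1 one by auto
qed

lemma P2_fst:
  fixes \<mu> :: "('a::euclidean_space \<times> 'a) measure"
  assumes mu: "\<mu> \<in> P2" shows "distr \<mu> borel fst \<in> P2"
proof -
  have p\<mu>: "prob_space \<mu>" and s\<mu>[measurable_cong]: "sets \<mu> = sets borel"
    and mom\<mu>: "(\<integral>\<^sup>+x. ennreal ((norm x)\<^sup>2) \<partial>\<mu>) < \<infinity>" using mu unfolding P2_def by blast+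
  have p: "prob_space (distr \<mu> borel fst)" by (rule prob_space.prob_space_distr[OF p\<mu>]) measurable
  have "(\<integral>\<^sup>+x. ennreal ((norm x)\<^sup>2) \<partial>distr \<mu> borel fst) = (\<integral>\<^sup>+q. ennreal ((norm (fst q))\<^sup>2) \<partial>\<mu>)"
    by (rule nn_integral_distr) measurable
  also have "\<dots> \<le> (\<integral>\<^sup>+q. ennreal ((norm q)\<^sup>2) \<partial>\<mu>)"
  proof (intro nn_integral_mono ennreal_leI power_mono)
    fix q :: "'a \<times> 'a"
    show "norm (fst q) \<le> norm q" using norm_fst_le[of "fst q" "snd q"] by simp
  qed simp
  also have "\<dots> < \<infinity>" by (rule mom\<mu>)
  finally show ?thesis using p unfolding P2_def by simp
qed

lemma ereal_div_anti:
  fixes x :: ereal and a b :: real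
  assumes "0 \<le> x" "0 < a" "a \<le> b"
  shows "x / ereal b \<le> x / ereal a"
proof (cases x)
  case (real x')
  then have "x' / b \<le> x' / a" using assms by (intro divide_left_mono) auto
  then show ?thesis using real assms by simp
next
  case PInf then show ?thesis using assms by simp
next
  case MInf then show ?thesis using assms by simp
qed

lemma real_eps_lemma:
  fixes x W s c :: real
  assumes W: "0 < W" and c: "0 < c" and s: "0 \<le> s"
    and H: "\<And>\<delta>. 0 < \<delta> \<Longrightarrow> \<delta> < c \<Longrightarrow> x \<le> s * (W + \<delta>)"
  shows "x \<le> s * W"
proof (rule field_le_epsilon)
  fix e :: real assume e: "0 < e"
  define \<delta> where "\<delta> = min (e / (s + 1)) (c / 2)"
  have d: "0 < \<delta>" "\<delta> < c" using e c s by (auto simp: \<delta>_def)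
  have "s * \<delta> \<le> s * (e / (s + 1))" using s by (intro mult_left_mono) (auto simp: \<delta>_def)
  also have "\<dots> \<le> e" using s e by (simp add: field_simps)
  finally have "s * \<delta> \<le> e" .
  with H[OF d] show "x \<le> s * W + e" by (simp add: algebra_simps)
qed

lemma approx:
  fixes \<mu> :: "('a::euclidean_space \<times> 'a) measure" and \<rho>' :: "'a measure"
  assumes mu: "\<mu> \<in> P2" and rho': "\<rho>' \<in> P2" and pos: "0 < W2 \<rho>' (distr \<mu> borel fst)" and \<delta>: "0 < \<delta>"
  shows "\<exists>\<nu>\<in>P2. distr \<nu> borel fst = \<rho>' \<and> Wc \<nu> \<mu> < \<infinity> \<and> W2 \<nu> \<mu> \<le> W2 \<rho>' (distr \<mu> borel fst) + \<delta>"
proof -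
  define \<rho> where "\<rho> = distr \<mu> borel fst"
  have fin: "Wc \<rho>' \<rho> < \<infinity>" using W2_pos_fin pos unfolding \<rho>_def by blast
  then obtain r where r: "Wc \<rho>' \<rho> = ennreal r" "0 \<le> r"
    by (cases "Wc \<rho>' \<rho>" rule: ennreal_cases) auto
  define W where "W = W2 \<rho>' \<rho>"
  have Wr: "W = sqrt r" unfolding W_def W2_Wc r using r by simp
  have W: "0 < W" using pos unfolding W_def \<rho>_def .
  have rW: "r = W\<^sup>2" using Wr r by simp
  have rpos: "0 < r" using W rW by simp
  define e where "e = W * \<delta>"
  have e: "0 < e" using W \<delta> by (simp add: e_def)
  define t where "t = e / (2 * (r + 1))"
  have t: "0 < t" using e r by (simp add: t_def)
  define s where "s = min 1 (e / 4)"
  have s: "0 < s" "s \<le> 1" "s \<le> e / 4" using e by (auto simp: s_def)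
  define \<eta> where "\<eta> = sqrt (e / (4 * (1 + 1 / t)))"
  have tt: "0 < 1 + 1 / t" using t by (simp add: add_pos_pos)
  have "0 < e / (4 * (1 + 1 / t))" using e tt by simp
  then have \<eta>: "0 < \<eta>" by (simp add: \<eta>_def)
  have \<eta>2: "(1 + 1 / t) * \<eta>\<^sup>2 = e / 4"
  proof -
    have "\<eta>\<^sup>2 = e / (4 * (1 + 1 / t))" unfolding \<eta>_def using e t by simp
    then show ?thesis using t by (simp add: field_simps)
  qed
  have "Wc \<rho>' \<rho> < ennreal (r + s)" using r s by simp
  then obtain \<gamma> where \<gamma>: "\<gamma> \<in> couplings \<rho>' \<rho>" and c\<gamma>: "cost \<gamma> < ennreal (r + s)"
    unfolding Wc_def by (auto simp: INF_less_iff)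
  obtain \<nu> where \<nu>: "\<nu> \<in> P2" "distr \<nu> borel fst = \<rho>'"
    and W\<nu>: "Wc \<nu> \<mu> \<le> ennreal (1 + t) * cost \<gamma> + ennreal ((1 + 1 / t) * \<eta>\<^sup>2)"
    using construct[OF mu rho' \<gamma>[unfolded \<rho>_def] \<eta> t] by blast
  define R where "R = (1 + t) * (r + s) + e / 4"
  have m1: "ennreal (1 + t) * cost \<gamma> \<le> ennreal (1 + t) * ennreal (r + s)"
    using c\<gamma> by (intro mult_left_mono) auto
  have "Wc \<nu> \<mu> \<le> ennreal (1 + t) * ennreal (r + s) + ennreal ((1 + 1 / t) * \<eta>\<^sup>2)"
    using W\<nu> add_right_mono[OF m1, of "ennreal ((1 + 1 / t) * \<eta>\<^sup>2)"] by (rule order_trans)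
  also have "ennreal (1 + t) * ennreal (r + s) = ennreal ((1 + t) * (r + s))"
    using t r s by (intro ennreal_mult[symmetric]) auto
  also have "ennreal ((1 + t) * (r + s)) + ennreal ((1 + 1 / t) * \<eta>\<^sup>2) = ennreal R"
    unfolding R_def \<eta>2 using t r s e by (intro ennreal_plus[symmetric]) auto
  finally have WR: "Wc \<nu> \<mu> \<le> ennreal R" .
  have R0: "0 \<le> R" using t r s e by (simp add: R_def)
  have "(1 + t) * (r + s) = r + s + t * (r + s)" by (simp add: algebra_simps)
  also have "t * (r + s) \<le> t * (r + 1)" using t s by (intro mult_left_mono) auto
  also have "t * (r + 1) = e / 2" using r by (simp add: t_def field_simps)
  finally have "(1 + t) * (r + s) \<le> r + s + e / 2" by simp
  then have "R \<le> r + e" using s unfolding R_def by linarith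
  also have "r + e \<le> (W + \<delta>)\<^sup>2" using rW e \<delta> W by (simp add: e_def power2_eq_square algebra_simps)
  finally have Rle: "R \<le> (W + \<delta>)\<^sup>2" .
  have fin\<nu>: "Wc \<nu> \<mu> < \<infinity>" using WR by (rule le_less_trans) simp
  have "enn2real (Wc \<nu> \<mu>) \<le> enn2real (ennreal R)" using WR by (rule enn2real_mono) simp
  then have "enn2real (Wc \<nu> \<mu>) \<le> R" using R0 by simp
  then have "W2 \<nu> \<mu> \<le> sqrt R" unfolding W2_Wc by simp
  also have "\<dots> \<le> sqrt ((W + \<delta>)\<^sup>2)" using Rle by (rule real_sqrt_le_mono)
  also have "\<dots> = W + \<delta>" using W \<delta> by simp
  finally show ?thesis using \<nu> fin\<nu> unfolding W_def \<rho>_def by blast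
qed

theorem mainTheorem8:
  fixes \<phi> :: "('a::euclidean_space) measure \<Rightarrow> ereal"
    and \<Phi> :: "('a \<times> 'a) measure \<Rightarrow> ereal"
    and \<mu> :: "('a \<times> 'a) measure"
  assumes phi_range: "\<forall>\<nu>\<in>P2. \<phi> \<nu> \<noteq> -\<infinity>"
    and Phi_range: "\<forall>\<nu>\<in>P2. \<Phi> \<nu> \<noteq> -\<infinity>"
    and phi_lsc: "narrow_lsc \<phi>"
    and Phi_lsc: "narrow_lsc \<Phi>"
    and Phi_phi: "\<forall>\<nu>\<in>P2. \<Phi> \<nu> = \<phi> (distr \<nu> borel fst)"
    and mu: "\<mu> \<in> P2"
    and finite: "\<Phi> \<mu> < \<infinity>"
  shows "slope P2 W2 \<Phi> \<mu> = slope P2 W2 \<phi> (distr \<mu> borel fst)"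
proof -
  define \<rho> where "\<rho> = distr \<mu> borel fst"
  have rhoP2: "\<rho> \<in> P2" unfolding \<rho>_def by (rule P2_fst[OF mu])
  have P2D: "prob_space m \<and> sets m = sets borel" if "m \<in> P2" for m :: "'a measure"
    using that unfolding P2_def by blast
  have \<Phi>\<mu>: "\<Phi> \<mu> = \<phi> \<rho>" using Phi_phi mu unfolding \<rho>_def by blast
  have "\<phi> \<rho> \<noteq> \<infinity>" "\<phi> \<rho> \<noteq> -\<infinity>" using finite \<Phi>\<mu> phi_range rhoP2 by auto
  then obtain a0 where a0: "\<phi> \<rho> = ereal a0" by (cases "\<phi> \<rho>") auto
  define S\<Phi> where "S\<Phi> r = (SUP w\<in>{w\<in>P2. 0 < W2 w \<mu> \<and> W2 w \<mu> < r}. max 0 (\<Phi> \<mu> - \<Phi> w) / ereal (W2 w \<mu>))" for r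
  define S\<phi> where "S\<phi> r = (SUP w\<in>{w\<in>P2. 0 < W2 w \<rho> \<and> W2 w \<rho> < r}. max 0 (\<phi> \<rho> - \<phi> w) / ereal (W2 w \<rho>))" for r
  have le1: "S\<Phi> r \<le> max 0 (S\<phi> r)" for r
    unfolding S\<Phi>_def
  proof (rule SUP_least)
    fix \<nu> assume "\<nu> \<in> {w\<in>P2. 0 < W2 w \<mu> \<and> W2 w \<mu> < r}"
    then have \<nu>P2: "\<nu> \<in> P2" and pos: "0 < W2 \<nu> \<mu>" and lt: "W2 \<nu> \<mu> < r" by auto
    define \<rho>' where "\<rho>' = distr \<nu> borel fst"
    have \<rho>'P2: "\<rho>' \<in> P2" unfolding \<rho>'_def by (rule P2_fst[OF \<nu>P2])
    have \<Phi>\<nu>: "\<Phi> \<nu> = \<phi> \<rho>'" using Phi_phi \<nu>P2 unfolding \<rho>'_def by blast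
    have fin\<nu>: "Wc \<nu> \<mu> < \<infinity>" using W2_pos_fin[OF pos] .
    have le: "Wc \<rho>' \<rho> \<le> Wc \<nu> \<mu>" unfolding \<rho>'_def \<rho>_def by (rule Wc_fst_le)
    have Wle: "W2 \<rho>' \<rho> \<le> W2 \<nu> \<mu>" using le fin\<nu> by (rule W2_mono)
    show "max 0 (\<Phi> \<mu> - \<Phi> \<nu>) / ereal (W2 \<nu> \<mu>) \<le> max 0 (S\<phi> r)"
    proof (cases "W2 \<rho>' \<rho> = 0")
      case True
      have "Wc \<rho>' \<rho> < \<infinity>" using le fin\<nu> by (rule le_less_trans)
      with True have "Wc \<rho>' \<rho> = 0" by (rule W2_zero)
      then have "\<rho>' = \<rho>"
        using P2D[OF \<rho>'P2] P2D[OF rhoP2] by (intro Wc_zero_eq) auto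
      then show ?thesis using \<Phi>\<mu> \<Phi>\<nu> a0 by simp
    next
      case False
      then have pos': "0 < W2 \<rho>' \<rho>" using W2_nonneg[of \<rho>' \<rho>] by linarith
      have mem: "\<rho>' \<in> {w\<in>P2. 0 < W2 w \<rho> \<and> W2 w \<rho> < r}" using \<rho>'P2 pos' Wle lt by auto
      have "max 0 (\<Phi> \<mu> - \<Phi> \<nu>) / ereal (W2 \<nu> \<mu>) = max 0 (\<phi> \<rho> - \<phi> \<rho>') / ereal (W2 \<nu> \<mu>)"
        using \<Phi>\<mu> \<Phi>\<nu> by simp
      also have "\<dots> \<le> max 0 (\<phi> \<rho> - \<phi> \<rho>') / ereal (W2 \<rho>' \<rho>)"
        by (rule ereal_div_anti) (auto simp: pos' Wle)
      also have "\<dots> \<le> S\<phi> r" unfolding S\<phi>_def by (rule SUP_upper[OF mem])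
      also have "\<dots> \<le> max 0 (S\<phi> r)" by simp
      finally show ?thesis .
    qed
  qed
  have le2: "S\<phi> r \<le> max 0 (S\<Phi> r)" for r
    unfolding S\<phi>_def
  proof (rule SUP_least)
    fix \<rho>' assume "\<rho>' \<in> {w\<in>P2. 0 < W2 w \<rho> \<and> W2 w \<rho> < r}"
    then have \<rho>'P2: "\<rho>' \<in> P2" and pos: "0 < W2 \<rho>' \<rho>" and lt: "W2 \<rho>' \<rho> < r" by auto
    define x where "x = max 0 (\<phi> \<rho> - \<phi> \<rho>')"
    have x0: "0 \<le> x" unfolding x_def by simp
    define W where "W = W2 \<rho>' \<rho>"
    have W: "0 < W" "W < r" using pos lt by (auto simp: W_def)
    have H: "x / ereal (W + \<delta>) \<le> S\<Phi> r" if \<delta>: "0 < \<delta>" "\<delta> < r - W" for \<delta>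
    proof -
      obtain \<nu> where \<nu>P2: "\<nu> \<in> P2" and marg: "distr \<nu> borel fst = \<rho>'" and fin\<nu>: "Wc \<nu> \<mu> < \<infinity>"
        and W\<nu>: "W2 \<nu> \<mu> \<le> W + \<delta>"
        using approx[OF mu \<rho>'P2 pos[unfolded \<rho>_def] \<delta>(1)] unfolding W_def \<rho>_def by blast
      have \<Phi>\<nu>: "\<Phi> \<nu> = \<phi> \<rho>'" using Phi_phi \<nu>P2 marg by blast
      have le: "Wc \<rho>' \<rho> \<le> Wc \<nu> \<mu>" unfolding marg[symmetric] \<rho>_def by (rule Wc_fst_le)
      have Wle: "W \<le> W2 \<nu> \<mu>" unfolding W_def using le fin\<nu> by (rule W2_mono)
      have mem: "\<nu> \<in> {w\<in>P2. 0 < W2 w \<mu> \<and> W2 w \<mu> < r}" using \<nu>P2 Wle W\<nu> W \<delta> by auto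
      have "x / ereal (W + \<delta>) \<le> x / ereal (W2 \<nu> \<mu>)"
        by (rule ereal_div_anti) (use x0 W Wle W\<nu> in auto)
      also have "\<dots> = max 0 (\<Phi> \<mu> - \<Phi> \<nu>) / ereal (W2 \<nu> \<mu>)" using \<Phi>\<mu> \<Phi>\<nu> by (simp add: x_def)
      also have "\<dots> \<le> S\<Phi> r" unfolding S\<Phi>_def by (rule SUP_upper[OF mem])
      finally show ?thesis .
    qed
    define c where "c = r - W"
    have c: "0 < c" using W by (simp add: c_def)
    have "x / ereal W \<le> max 0 (S\<Phi> r)"
    proof (cases x)
      case PInf
      have "x / ereal (W + c / 2) \<le> S\<Phi> r" using c by (intro H) (auto simp: c_def)
      then have "S\<Phi> r = \<infinity>" using PInf W c by simp
      then show ?thesis by simp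
    next
      case MInf then show ?thesis using x0 by simp
    next
      case (real x')
      have x'0: "0 \<le> x'" using x0 real by simp
      have H': "ereal (x' / (W + \<delta>)) \<le> S\<Phi> r" if "0 < \<delta>" "\<delta> < c" for \<delta>
        using H[of \<delta>] that W real by (simp add: c_def)
      show ?thesis
      proof (cases "S\<Phi> r")
        case (real s)
        have s0: "0 \<le> s" using H'[of "c / 2"] c W x'0 real by (auto intro: order_trans[rotated])
        have "x' \<le> s * W"
        proof (rule real_eps_lemma[OF W(1) c s0])
          fix \<delta> :: real assume d: "0 < \<delta>" "\<delta> < c"
          have "x' / (W + \<delta>) \<le> s" using H'[OF d] real by simp
          then show "x' \<le> s * (W + \<delta>)" using W d by (simp add: pos_divide_le_eq mult.commute)
        qed
        then have "x' / W \<le> s" using W by (simp add: pos_divide_le_eq mult.commute)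
        then show ?thesis using \<open>x = ereal x'\<close> real W by (simp add: le_max_iff_disj)
      next
        case PInf then show ?thesis by simp
      next
        case MInf
        then show ?thesis using H'[of "c / 2"] c by simp
      qed
    qed
    then show "max 0 (\<phi> \<rho> - \<phi> \<rho>') / ereal (W2 \<rho>' \<rho>) \<le> max 0 (S\<Phi> r)"
      unfolding x_def W_def .
  qed
  have key: "max 0 (S\<Phi> r) = max 0 (S\<phi> r)" for r
  proof (rule antisym)
    show "max 0 (S\<Phi> r) \<le> max 0 (S\<phi> r)" using le1[of r] by (simp add: max.coboundedI1)
    show "max 0 (S\<phi> r) \<le> max 0 (S\<Phi> r)" using le2[of r] by (simp add: max.coboundedI1)
  qed
  have "slope P2 W2 \<Phi> \<mu> = (INF r\<in>{0<..}. max 0 (S\<Phi> r))" unfolding slope_def S\<Phi>_def ..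
  also have "\<dots> = (INF r\<in>{0<..}. max 0 (S\<phi> r))" using key by simp
  also have "\<dots> = slope P2 W2 \<phi> (distr \<mu> borel fst)" unfolding slope_def S\<phi>_def \<rho>_def ..
  finally show ?thesis .
qed


end
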